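(* Let $\ell\in\mathbb{N}$, let $G$ be an $\ell$-tuple regular finite group and let $N$ be a subgroup of $G$ that is a union of order classes. Then $N$ is $\ell$-tuple regular.
   Context: A subgroup $N$ of $G$ is a union of order classes if for every $n\in\mathbb{N}$ it contains either all or none of the elements of order $n$ of $G$. For $\ell\in\mathbb{N}$, a finite group $G$ is $\ell$-tuple regular if for all tuples $(g_1,\ldots,g_\ell),(h_1,\ldots,h_\ell)\in G^\ell$ (entries may repeat) for which $g_i\mapsto h_i$ defines an isomorphism $\langle g_1,\ldots,g_\ell\rangle\to\langle h_1,\ldots,h_\ell\rangle$, there exists a bijection $\Psi\colon G\to G$ such that for every $g\in G$ the assignment $g_1\mapsto h_1,\ldots,g_\ell\mapsto h_\ell,g\mapsto\Psi(g)$ defines an isomorphism $\langle g_1,\ldots,g_\ell,g\rangle\to\langle h_1,\ldots,h_\ell,\Psi(g)\rangle$. *)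

theory Defs
  imports "HOL-Algebra.Algebra"
begin

definition union_of_order_classes :: "('a, 'b) monoid_scheme \<Rightarrow> 'a set \<Rightarrow> bool" where
  "union_of_order_classes G N \<longleftrightarrow>
     (\<forall>n::nat. (\<forall>x\<in>carrier G. group.ord G x = n \<longrightarrow> x \<in> N) \<or>
               (\<forall>x\<in>carrier G. group.ord G x = n \<longrightarrow> x \<notin> N))"

definition tuple_regular :: "nat \<Rightarrow> ('a, 'b) monoid_scheme \<Rightarrow> bool" where
  "tuple_regular l G \<longleftrightarrow>
     (\<forall>g h :: nat \<Rightarrow> 'a.
        (\<forall>i<l. g i \<in> carrier G) \<and> (\<forall>i<l. h i \<in> carrier G) \<and>
        (\<exists>\<phi>. \<phi> \<in> iso (G\<lparr>carrier := generate G (g ` {..<l})\<rparr>)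
                       (G\<lparr>carrier := generate G (h ` {..<l})\<rparr>) \<and>
              (\<forall>i<l. \<phi> (g i) = h i))
        \<longrightarrow>
        (\<exists>\<Psi>. bij_betw \<Psi> (carrier G) (carrier G) \<and>
           (\<forall>x\<in>carrier G. \<exists>\<phi>.
              \<phi> \<in> iso (G\<lparr>carrier := generate G (insert x (g ` {..<l}))\<rparr>)
                       (G\<lparr>carrier := generate G (insert (\<Psi> x) (h ` {..<l}))\<rparr>) \<and>
              (\<forall>i<l. \<phi> (g i) = h i) \<and> \<phi> x = \<Psi> x)))"

end

theory Submission
  imports Defs
begin

lemma ord_iso_gen:
  assumes G: "group G" and SA: "SA \<subseteq> carrier G" and SB: "SB \<subseteq> carrier G"
    and phi: "\<phi> \<in> iso (G\<lparr>carrier := generate G SA\<rparr>) (G\<lparr>carrier := generate G SB\<rparr>)"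
    and x: "x \<in> generate G SA"
  shows "group.ord G (\<phi> x) = group.ord G x"
proof -
  let ?A = "generate G SA" and ?B = "generate G SB"
  have sA: "subgroup ?A G" by (rule group.generate_is_subgroup[OF G SA])
  have sB: "subgroup ?B G" by (rule group.generate_is_subgroup[OF G SB])
  have gA: "group (G\<lparr>carrier := ?A\<rparr>)" by (rule subgroup.subgroup_is_group[OF sA G])
  have gB: "group (G\<lparr>carrier := ?B\<rparr>)" by (rule subgroup.subgroup_is_group[OF sB G])
  have hom: "\<phi> \<in> hom (G\<lparr>carrier := ?A\<rparr>) (G\<lparr>carrier := ?B\<rparr>)" using phi by (simp add: iso_def)
  have bij: "bij_betw \<phi> ?A ?B" using phi by (simp add: iso_def)
  have xG: "x \<in> carrier G" using x subgroup.subset[OF sA] by blast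
  have phix: "\<phi> x \<in> ?B" using bij x by (auto simp: bij_betw_def)
  have phixG: "\<phi> x \<in> carrier G" using phix subgroup.subset[OF sB] by blast
  have one: "\<phi> \<one>\<^bsub>G\<^esub> = \<one>\<^bsub>G\<^esub>"
    using group_hom.hom_one[of "G\<lparr>carrier := ?A\<rparr>" "G\<lparr>carrier := ?B\<rparr>" \<phi>] gA gB hom
    by (simp add: group_hom_def group_hom_axioms_def)
  have key: "x [^]\<^bsub>G\<^esub> n = \<one>\<^bsub>G\<^esub> \<longleftrightarrow> \<phi> x [^]\<^bsub>G\<^esub> n = \<one>\<^bsub>G\<^esub>" for n :: nat
  proof -
    have p: "\<phi> (x [^]\<^bsub>G\<^esub> n) = \<phi> x [^]\<^bsub>G\<^esub> n"
      using hom_nat_pow[OF hom _ gA gB, of x n] x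
      by (simp add: nat_pow_def)
    have "x [^]\<^bsub>G\<lparr>carrier := ?A\<rparr>\<^esub> n \<in> carrier (G\<lparr>carrier := ?A\<rparr>)"
      using monoid.nat_pow_closed[OF group.is_monoid[OF gA]] x by simp
    hence xn: "x [^]\<^bsub>G\<^esub> n \<in> ?A" by (simp add: nat_pow_def)
    have o: "\<one>\<^bsub>G\<^esub> \<in> ?A" using subgroup.one_closed[OF sA] by simp
    have inj: "inj_on \<phi> ?A" using bij by (simp add: bij_betw_def)
    show ?thesis using p one inj xn o by (metis inj_on_eq_iff)
  qed
  have "group.ord G x dvd group.ord G (\<phi> x)"
    using key group.pow_eq_id[OF G xG] group.pow_eq_id[OF G phixG] by (metis dvd_refl)
  moreover have "group.ord G (\<phi> x) dvd group.ord G x"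
    using key group.pow_eq_id[OF G xG] group.pow_eq_id[OF G phixG] by (metis dvd_refl)
  ultimately show ?thesis by (simp add: dvd_antisym)
qed

theorem lemma3p2:
  fixes G :: "('a, 'b) monoid_scheme" and N :: "'a set" and l :: nat
  assumes "group G" and "finite (carrier G)" and "tuple_regular l G"
    and "subgroup N G" and "union_of_order_classes G N"
  shows "tuple_regular l (G\<lparr>carrier := N\<rparr>)"
proof -
  have NG: "N \<subseteq> carrier G" using assms(4) subgroup.subset by blast
  have gen: "Y \<subseteq> N \<Longrightarrow> generate (G\<lparr>carrier := N\<rparr>) Y = generate G Y" for Y
    using group.generate_consistent[OF assms(1) _ assms(4)] by blast
  show ?thesis
    unfolding tuple_regular_def
  proof (intro allI impI)
    fix g h :: "nat \<Rightarrow> 'a"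
    assume A: "(\<forall>i<l. g i \<in> carrier (G\<lparr>carrier := N\<rparr>)) \<and> (\<forall>i<l. h i \<in> carrier (G\<lparr>carrier := N\<rparr>)) \<and>
        (\<exists>\<phi>. \<phi> \<in> iso (G\<lparr>carrier := N\<rparr>\<lparr>carrier := generate (G\<lparr>carrier := N\<rparr>) (g ` {..<l})\<rparr>)
                       (G\<lparr>carrier := N\<rparr>\<lparr>carrier := generate (G\<lparr>carrier := N\<rparr>) (h ` {..<l})\<rparr>) \<and>
              (\<forall>i<l. \<phi> (g i) = h i))"
    have gN: "g ` {..<l} \<subseteq> N" and hN: "h ` {..<l} \<subseteq> N" using A by auto
    have gG: "g ` {..<l} \<subseteq> carrier G" and hG: "h ` {..<l} \<subseteq> carrier G" using gN hN NG by auto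
    have A': "(\<forall>i<l. g i \<in> carrier G) \<and> (\<forall>i<l. h i \<in> carrier G) \<and>
        (\<exists>\<phi>. \<phi> \<in> iso (G\<lparr>carrier := generate G (g ` {..<l})\<rparr>)
                       (G\<lparr>carrier := generate G (h ` {..<l})\<rparr>) \<and>
              (\<forall>i<l. \<phi> (g i) = h i))"
      using A gG hG gen[OF gN] gen[OF hN] by auto
    obtain \<Psi> where bij: "bij_betw \<Psi> (carrier G) (carrier G)" and
      P: "\<forall>x\<in>carrier G. \<exists>\<phi>.
              \<phi> \<in> iso (G\<lparr>carrier := generate G (insert x (g ` {..<l}))\<rparr>)
                       (G\<lparr>carrier := generate G (insert (\<Psi> x) (h ` {..<l}))\<rparr>) \<and>
              (\<forall>i<l. \<phi> (g i) = h i) \<and> \<phi> x = \<Psi> x"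
      using assms(3) A' unfolding tuple_regular_def by blast
    have PN: "\<Psi> x \<in> N" if x: "x \<in> N" for x
    proof -
      have xG: "x \<in> carrier G" using x NG by blast
      have PG: "\<Psi> x \<in> carrier G" using bij xG by (auto simp: bij_betw_def)
      obtain \<phi> where phi: "\<phi> \<in> iso (G\<lparr>carrier := generate G (insert x (g ` {..<l}))\<rparr>)
                       (G\<lparr>carrier := generate G (insert (\<Psi> x) (h ` {..<l}))\<rparr>)" and px: "\<phi> x = \<Psi> x"
        using P xG by blast
      have "group.ord G (\<phi> x) = group.ord G x"
        by (rule ord_iso_gen[OF assms(1) _ _ phi]) (use xG PG gG hG in \<open>auto intro: generate.incl\<close>)
      hence o: "group.ord G (\<Psi> x) = group.ord G x" using px by simp
      show ?thesis using assms(5) unfolding union_of_order_classes_def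
        by (metis o x xG PG)
    qed
    have inj: "inj_on \<Psi> N" using bij NG by (meson bij_betw_def inj_on_subset)
    have finN: "finite N" using assms(2) NG finite_subset by blast
    have img: "\<Psi> ` N = N" using endo_inj_surj[OF finN _ inj] PN by blast
    have bijN: "bij_betw \<Psi> N N" using inj img by (simp add: bij_betw_def)
    have R: "\<exists>\<phi>. \<phi> \<in> iso (G\<lparr>carrier := N\<rparr>\<lparr>carrier := generate (G\<lparr>carrier := N\<rparr>) (insert x (g ` {..<l}))\<rparr>)
                       (G\<lparr>carrier := N\<rparr>\<lparr>carrier := generate (G\<lparr>carrier := N\<rparr>) (insert (\<Psi> x) (h ` {..<l}))\<rparr>) \<and>
              (\<forall>i<l. \<phi> (g i) = h i) \<and> \<phi> x = \<Psi> x" if x: "x \<in> N" for x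
    proof -
      have e1: "generate (G\<lparr>carrier := N\<rparr>) (insert x (g ` {..<l})) = generate G (insert x (g ` {..<l}))"
        using gen gN x by auto
      have e2: "generate (G\<lparr>carrier := N\<rparr>) (insert (\<Psi> x) (h ` {..<l})) = generate G (insert (\<Psi> x) (h ` {..<l}))"
        using gen hN PN[OF x] by auto
      show ?thesis
        unfolding e1 e2 using P x NG by auto
    qed
    show "\<exists>\<Psi>. bij_betw \<Psi> (carrier (G\<lparr>carrier := N\<rparr>)) (carrier (G\<lparr>carrier := N\<rparr>)) \<and>
           (\<forall>x\<in>carrier (G\<lparr>carrier := N\<rparr>). \<exists>\<phi>.
              \<phi> \<in> iso (G\<lparr>carrier := N\<rparr>\<lparr>carrier := generate (G\<lparr>carrier := N\<rparr>) (insert x (g ` {..<l}))\<rparr>)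
                       (G\<lparr>carrier := N\<rparr>\<lparr>carrier := generate (G\<lparr>carrier := N\<rparr>) (insert (\<Psi> x) (h ` {..<l}))\<rparr>) \<and>
              (\<forall>i<l. \<phi> (g i) = h i) \<and> \<phi> x = \<Psi> x)"
      using bijN R by (intro exI[of _ \<Psi>]) simp
  qed
qed

end
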